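(* Consider the optimization problem: for every total allocated bandwidth $W\in(0,W_{tot}]$, choose the bandwidths $w_u>0$ and transmit powers $p_u$ of the users $u\in\mathcal{U}$ so as to maximize the energy efficiency $\textit{EE}=\frac{\sum_{u\in\mathcal{U}} T_u\,\mathbb{P}(C_u\ge T_u)}{\sum_{u\in\mathcal{U}} p_u}$, subject to (1) $p_u=\frac{gN_0\Gamma}{\ell_u}\left(2^{T_u/w_u}-1\right)w_u$ for every $u$, and (2) $\sum_{u\in\mathcal{U}} w_u=W$. The solution of this problem requires that, for the set of users experiencing the same attenuation $\ell_u$, the bandwidth $w_u$ is proportional to the traffic demand $T_u$, and as a result the power spectral density $\delta p_u\triangleq \frac{p_u}{w_u}$ is constant among these users.
   Context: Single-cell downlink OFDMA model: a base station serves a set $\mathcal{U}$ of $N_U$ users, user $u$ having data rate demand $T_u$, allocated bandwidth $w_u$ and dedicated transmit power $p_u$, with total power and bandwidth budgets $P_{tot}$ and $W_{tot}$. The user capacity is $C_u=w_u\log_2\!\left(1+\frac{1}{\Gamma}\frac{p_u h_f \ell_u}{w_u N_0}\right)$, where $\Gamma$ is the SNR gap, $N_0$ the noise power spectral density, $\ell_u$ the deterministic path-loss attenuation (known at the base station), and $h_f$ is Rayleigh fading, i.e. exponentially distributed with mean $1/\tau$. Requiring the success probability $\mathbb{P}(C_u\ge T_u)$ to equal a threshold $0<c<1$ gives the minimum required power $p_u=\frac{gN_0\Gamma}{\ell_u}\left(2^{T_u/w_u}-1\right)w_u$ with $g\triangleq \frac{\tau}{\ln(1/c)}>0$. *)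

theory Defs
  imports "HOL-Probability.Probability"
begin

text \<open>Rayleigh fading: h_f exponentially distributed with rate tau (mean 1/tau).\<close>
definition fading :: "real \<Rightarrow> real measure" where
  "fading tau = density lborel (exponential_density tau)"

definition capacity :: "real \<Rightarrow> real \<Rightarrow> real \<Rightarrow> real \<Rightarrow> real \<Rightarrow> real \<Rightarrow> real" where
  "capacity Gam N0 l w p h = w * log 2 (1 + (1 / Gam) * (p * h * l) / (w * N0))"

definition succ_prob :: "real \<Rightarrow> real \<Rightarrow> real \<Rightarrow> real \<Rightarrow> real \<Rightarrow> real \<Rightarrow> real \<Rightarrow> real" where
  "succ_prob tau Gam N0 l w p T =
     measure (fading tau) {h \<in> space (fading tau). capacity Gam N0 l w p h \<ge> T}"

definition gconst :: "real \<Rightarrow> real \<Rightarrow> real" where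
  "gconst tau c = tau / ln (1 / c)"

definition req_power :: "real \<Rightarrow> real \<Rightarrow> real \<Rightarrow> real \<Rightarrow> real \<Rightarrow> real \<Rightarrow> real" where
  "req_power g N0 Gam l T w = g * N0 * Gam / l * (2 powr (T / w) - 1) * w"

definition EE :: "'a set \<Rightarrow> real \<Rightarrow> real \<Rightarrow> real \<Rightarrow> ('a \<Rightarrow> real) \<Rightarrow> ('a \<Rightarrow> real)
                   \<Rightarrow> ('a \<Rightarrow> real) \<Rightarrow> ('a \<Rightarrow> real) \<Rightarrow> real" where
  "EE U tau Gam N0 l T w p =
     (\<Sum>u\<in>U. T u * succ_prob tau Gam N0 (l u) (w u) (p u) (T u)) / (\<Sum>u\<in>U. p u)"

definition feasible :: "'a set \<Rightarrow> real \<Rightarrow> real \<Rightarrow> real \<Rightarrow> ('a \<Rightarrow> real) \<Rightarrow> ('a \<Rightarrow> real)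
                        \<Rightarrow> real \<Rightarrow> ('a \<Rightarrow> real) \<Rightarrow> ('a \<Rightarrow> real) \<Rightarrow> bool" where
  "feasible U g N0 Gam l T W w p \<longleftrightarrow>
     (\<forall>u\<in>U. w u > 0) \<and>
     (\<forall>u\<in>U. p u = req_power g N0 Gam (l u) (T u) (w u)) \<and>
     (\<Sum>u\<in>U. w u) = W"

end

theory Submission
  imports Defs
begin

lemma fading_pos:
  assumes "tau > 0" "x0 \<ge> 0"
  shows "measure (fading tau) {x0..} \<ge> exp (- x0 * tau)"
proof -
  interpret prob_space "fading tau" unfolding fading_def
    using prob_space_exponential_density[OF assms(1)] .
  have D: "distributed (fading tau) lborel (\<lambda>x. x) (exponential_density tau)"
    unfolding distributed_def fading_def
    by (auto simp: distr_id2 cong: distr_cong)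
  have "\<P>(x in fading tau. x0 < x) = exp (- x0 * tau)"
    using exponential_distributedD_gt[OF D assms(2,1)] .
  moreover have "\<P>(x in fading tau. x0 < x) \<le> measure (fading tau) {x0..}"
    by (rule finite_measure_mono) (auto simp: fading_def)
  ultimately show ?thesis by simp
qed

lemma succ_const:
  assumes "tau > 0" "0 < c" "c < 1" "N0 > 0" "Gam > 0" "l > 0" "w > 0" "T > 0"
  shows "succ_prob tau Gam N0 l w (req_power (gconst tau c) N0 Gam l T w) T
         = measure (fading tau) {ln (1/c) / tau..}"
proof -
  define g where "g = gconst tau c"
  have g: "g > 0" using assms by (simp add: g_def gconst_def)
  define E where "E = 2 powr (T / w) - 1"
  have E: "E > 0" using assms by (simp add: E_def)
  have x0: "ln (1/c) / tau = 1 / g" using assms by (simp add: g_def gconst_def)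
  have key: "capacity Gam N0 l w (req_power g N0 Gam l T w) h \<ge> T \<longleftrightarrow> h \<ge> 1/g"
    if h: "h \<ge> 0" for h
  proof -
    have arg: "1 + (1 / Gam) * (req_power g N0 Gam l T w * h * l) / (w * N0) = 1 + g * h * E"
      using assms by (simp add: req_power_def E_def field_simps)
    have pos: "1 + g * h * E > 0" using g h E by (simp add: add_pos_nonneg)
    have "capacity Gam N0 l w (req_power g N0 Gam l T w) h \<ge> T \<longleftrightarrow> T / w \<le> log 2 (1 + g*h*E)"
      unfolding capacity_def arg using assms by (simp add: field_simps mult.commute)
    also have "\<dots> \<longleftrightarrow> 2 powr (T/w) \<le> 1 + g*h*E"
      using pos by (simp add: le_log_iff)
    also have "\<dots> \<longleftrightarrow> E \<le> g*h*E" unfolding E_def by linarith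
    also have "\<dots> \<longleftrightarrow> 1 \<le> g*h" using E by simp
    also have "\<dots> \<longleftrightarrow> h \<ge> 1/g" using g by (simp add: field_simps)
    finally show ?thesis .
  qed
  have "measure (fading tau) {h \<in> space (fading tau). capacity Gam N0 l w (req_power g N0 Gam l T w) h \<ge> T}
        = measure (fading tau) {1/g..}"
  proof (rule measure_eq_AE)
    show "AE h in fading tau. (h \<in> {h \<in> space (fading tau). T \<le> capacity Gam N0 l w (req_power g N0 Gam l T w) h}) = (h \<in> {1 / g..})"
      unfolding fading_def
      by (subst AE_density) (auto simp: exponential_density_def key not_less)
    show "{h \<in> space (fading tau). T \<le> capacity Gam N0 l w (req_power g N0 Gam l T w) h} \<in> sets (fading tau)"
      unfolding fading_def capacity_def by measurable
    show "{1 / g..} \<in> sets (fading tau)" by (simp add: fading_def)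
  qed
  then show ?thesis unfolding succ_prob_def x0 g_def .
qed

lemma exp_strict: "z \<noteq> 0 \<Longrightarrow> 1 + z < exp (z::real)"
proof (cases "1 + z/2 \<ge> 0")
  case True
  assume z: "z \<noteq> 0"
  have "(1 + z/2)^2 \<le> exp (z/2) ^ 2"
    using True by (intro power_mono) auto
  also have "\<dots> = exp z" by (simp add: power2_eq_square exp_add[symmetric])
  finally have "(1 + z/2)^2 \<le> exp z" .
  moreover have "1 + z < (1 + z/2)^2" using z by (simp add: power2_eq_square field_simps)
    (metis not_real_square_gt_zero)
  ultimately show ?thesis by linarith
next
  case False
  then have "1 + z < 0" by linarith
  then show ?thesis using exp_gt_zero[of z] by linarith
qed

lemma powr2_strict: "z \<noteq> 0 \<Longrightarrow> 1 + z * ln 2 < 2 powr (z::real)"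
  using exp_strict[of "z * ln 2"] by (simp add: powr_def mult.commute)

lemma convex2:
  fixes wu wv xu xv :: real
  assumes "wu > 0" "wv > 0" "xu \<noteq> xv"
  shows "(wu+wv) * 2 powr ((wu*xu+wv*xv)/(wu+wv)) < wu * 2 powr xu + wv * 2 powr xv"
proof -
  define m where "m = (wu*xu+wv*xv)/(wu+wv)"
  have S: "wu + wv > 0" using assms by simp
  have du: "xu - m \<noteq> 0" using assms unfolding m_def by (auto simp: field_simps)
  have dv: "xv - m \<noteq> 0" using assms unfolding m_def by (auto simp: field_simps)
  have bal: "wu * (xu - m) + wv * (xv - m) = 0" using S unfolding m_def by (simp add: field_simps)
  have eu: "2 powr xu = 2 powr m * 2 powr (xu - m)" by (simp add: powr_add[symmetric])
  have ev: "2 powr xv = 2 powr m * 2 powr (xv - m)" by (simp add: powr_add[symmetric])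
  have pm: "2 powr m > 0" by simp
  have "wu * (1 + (xu - m) * ln 2) < wu * 2 powr (xu - m)"
    using powr2_strict[OF du] assms by simp
  moreover have "wv * (1 + (xv - m) * ln 2) < wv * 2 powr (xv - m)"
    using powr2_strict[OF dv] assms by simp
  ultimately have "wu * (1 + (xu - m) * ln 2) + wv * (1 + (xv - m) * ln 2)
      < wu * 2 powr (xu - m) + wv * 2 powr (xv - m)" by linarith
  moreover have "wu * (1 + (xu - m) * ln 2) + wv * (1 + (xv - m) * ln 2) = wu + wv"
  proof -
    have "wu * (1 + (xu - m) * ln 2) + wv * (1 + (xv - m) * ln 2) = wu + wv + (wu * (xu - m) + wv * (xv - m)) * ln 2"
      by (simp add: algebra_simps)
    then show ?thesis using bal by simp
  qed
  ultimately have "wu + wv < wu * 2 powr (xu - m) + wv * 2 powr (xv - m)" by simp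
  then have "2 powr m * (wu + wv) < 2 powr m * (wu * 2 powr (xu - m) + wv * 2 powr (xv - m))"
    using pm by simp
  then show ?thesis unfolding m_def[symmetric] eu ev by (simp add: algebra_simps)
qed

lemma sum_two:
  assumes "finite U" "u \<in> U" "v \<in> U" "u \<noteq> v"
  shows "sum f U = f u + f v + sum f (U - {u,v})"
proof -
  have "sum f U = f u + sum f (U - {u})" using assms by (simp add: sum.remove)
  also have "sum f (U - {u}) = f v + sum f (U - {u} - {v})"
    using assms by (intro sum.remove) auto
  also have "U - {u} - {v} = U - {u,v}" by auto
  finally show ?thesis by (simp add: add.assoc)
qed


lemma EE_feas:
  assumes "finite U" "\<forall>u\<in>U. T u > 0" "\<forall>u\<in>U. l u > 0"
    "N0 > 0" "Gam > 0" "tau > 0" "0 < c" "c < 1"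
    "feasible U (gconst tau c) N0 Gam l T W w p"
  shows "EE U tau Gam N0 l T w p = measure (fading tau) {ln (1/c) / tau..} * (\<Sum>u\<in>U. T u) / (\<Sum>u\<in>U. p u)"
proof -
  have "\<And>u. u \<in> U \<Longrightarrow> succ_prob tau Gam N0 (l u) (w u) (p u) (T u) = measure (fading tau) {ln (1/c) / tau..}"
    using assms succ_const[of tau c N0 Gam] unfolding feasible_def by auto
  then have "(\<Sum>u\<in>U. T u * succ_prob tau Gam N0 (l u) (w u) (p u) (T u))
      = (\<Sum>u\<in>U. T u * measure (fading tau) {ln (1/c) / tau..})" by (intro sum.cong) auto
  also have "\<dots> = (\<Sum>u\<in>U. T u) * measure (fading tau) {ln (1/c) / tau..}"
    by (simp add: sum_distrib_right)
  finally show ?thesis unfolding EE_def by (simp add: mult.commute)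
qed

lemma p_pos:
  assumes "\<forall>u\<in>U. T u > 0" "\<forall>u\<in>U. l u > 0"
    "N0 > 0" "Gam > 0" "tau > 0" "0 < c" "c < 1"
    "feasible U (gconst tau c) N0 Gam l T W w p" "u \<in> U"
  shows "p u > 0"
proof -
  have g: "gconst tau c > 0" using assms by (simp add: gconst_def)
  have "2 powr (T u / w u) - 1 > 0" using assms unfolding feasible_def by auto
  then show ?thesis using assms g unfolding feasible_def req_power_def by auto
qed

theorem theorem1:
  fixes U :: "'a set" and T l w p :: "'a \<Rightarrow> real"
    and N0 Gam tau c W Wtot Ptot :: real
  assumes "finite U" and "U \<noteq> {}"
    and "\<forall>u\<in>U. T u > 0" and "\<forall>u\<in>U. l u > 0"
    and "N0 > 0" and "Gam > 0" and "tau > 0" and "0 < c" and "c < 1"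
    and "0 < W" and "W \<le> Wtot"
    and opt_feas: "feasible U (gconst tau c) N0 Gam l T W w p"
    and opt_max: "\<forall>w' p'. feasible U (gconst tau c) N0 Gam l T W w' p' \<longrightarrow>
                      EE U tau Gam N0 l T w' p' \<le> EE U tau Gam N0 l T w p"
  shows "\<forall>u\<in>U. \<forall>v\<in>U. l u = l v \<longrightarrow>
           w u / T u = w v / T v \<and> p u / w u = p v / w v"
proof (intro ballI impI)
  fix u v assume u: "u \<in> U" and v: "v \<in> U" and luv: "l u = l v"
  define g where "g = gconst tau c"
  have g: "g > 0" using assms by (simp add: g_def gconst_def)
  define q where "q = measure (fading tau) {ln (1/c) / tau..}"
  have lnc: "ln (1/c) / tau \<ge> 0" using assms by simp
  have "q \<ge> exp (- (ln (1/c) / tau) * tau)" unfolding q_def using fading_pos[OF assms(7) lnc] .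
  then have q: "q > 0" by (meson exp_gt_zero less_le_trans)
  have wpos: "\<forall>x\<in>U. w x > 0" and pdef: "\<forall>x\<in>U. p x = req_power g N0 Gam (l x) (T x) (w x)"
    and wsum: "(\<Sum>x\<in>U. w x) = W" using opt_feas unfolding feasible_def g_def by auto
  have Tsum: "(\<Sum>x\<in>U. T x) > 0" using assms by (intro sum_pos) auto
  have psum: "(\<Sum>x\<in>U. p x) > 0" using assms p_pos[OF assms(3-9) opt_feas] by (intro sum_pos) auto
  have ratio: "T u / w u = T v / w v"
  proof (rule ccontr)
    assume ne: "T u / w u \<noteq> T v / w v"
    then have uv: "u \<noteq> v" by auto
    define S where "S = w u + w v"
    have S: "S > 0" using wpos u v by (simp add: S_def add_pos_pos)
    define s where "s = (T u + T v) / S"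
    have s: "s > 0" using S assms u v by (simp add: s_def add_pos_pos)
    define w' where "w' = w(u := T u / s, v := T v / s)"
    define p' where "p' = (\<lambda>x. req_power g N0 Gam (l x) (T x) (w' x))"
    have w'u: "w' u = T u / s" and w'v: "w' v = T v / s" using uv by (auto simp: w'_def)
    have w'o: "\<And>x. x \<in> U - {u,v} \<Longrightarrow> w' x = w x" by (auto simp: w'_def)
    have "(\<Sum>x\<in>U. w' x) = w' u + w' v + (\<Sum>x\<in>U - {u,v}. w' x)"
      using sum_two[OF assms(1) u v uv] .
    also have "(\<Sum>x\<in>U - {u,v}. w' x) = (\<Sum>x\<in>U - {u,v}. w x)" using w'o by (rule sum.cong[OF refl])
    also have "w' u + w' v = S" unfolding w'u w'v s_def using S s
      by (simp add: field_simps s_def add_divide_distrib[symmetric])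
    also have "S + (\<Sum>x\<in>U - {u,v}. w x) = (\<Sum>x\<in>U. w x)"
      using sum_two[OF assms(1) u v uv, of w] S_def by simp
    finally have w'sum: "(\<Sum>x\<in>U. w' x) = W" using wsum by simp
    have w'pos: "\<forall>x\<in>U. w' x > 0" using wpos s assms(3) by (auto simp: w'_def)
    have feas': "feasible U (gconst tau c) N0 Gam l T W w' p'"
      unfolding feasible_def p'_def g_def using w'pos w'sum by auto
    have p'pos: "(\<Sum>x\<in>U. p' x) > 0"
      using assms p_pos[OF assms(3-9) feas'] by (intro sum_pos) auto
    define a where "a = g * N0 * Gam / l u"
    have a: "a > 0" using g assms u by (simp add: a_def)
    define xu where "xu = T u / w u"
    define xv where "xv = T v / w v"
    have Tu: "T u = w u * xu" and Tv: "T v = w v * xv" using wpos u v by (auto simp: xu_def xv_def)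
    have sx: "s = (w u * xu + w v * xv) / (w u + w v)" unfolding s_def S_def Tu Tv ..
    have puv: "p u + p v = a * (w u * 2 powr xu + w v * 2 powr xv - (w u + w v))"
    proof -
      have "p u = req_power g N0 Gam (l u) (T u) (w u)" "p v = req_power g N0 Gam (l v) (T v) (w v)"
        using pdef u v by auto
      then show ?thesis using luv unfolding req_power_def a_def xu_def xv_def
        by (simp add: algebra_simps add_divide_distrib)
    qed
    have "T u / (T u / s) = s" using s assms(3) u by force
    moreover have "T v / (T v / s) = s" using s assms(3) v by force
    ultimately have p'uv: "p' u + p' v = a * ((w u + w v) * 2 powr s - (w u + w v))"
    proof -
      assume h1: "T u / (T u / s) = s" and h2: "T v / (T v / s) = s"
      have "p' u = a * (2 powr s - 1) * (T u / s)" unfolding p'_def req_power_def a_def w'u h1 by simp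
      moreover have "p' v = a * (2 powr s - 1) * (T v / s)" unfolding p'_def req_power_def a_def w'v h2 luv by simp
      moreover have "T u / s + T v / s = S" proof -
        have "T u + T v > 0" using assms(3) u v by (simp add: add_pos_pos)
        then show ?thesis using S unfolding s_def add_divide_distrib[symmetric] by simp
      qed
      ultimately have "p' u + p' v = a * (2 powr s - 1) * S" by (metis distrib_left)
      then show ?thesis unfolding S_def by (simp add: algebra_simps)
    qed
    have "(w u + w v) * 2 powr s < w u * 2 powr xu + w v * 2 powr xv"
      unfolding sx using convex2[of "w u" "w v" xu xv] wpos u v ne by (simp add: xu_def xv_def)
    then have lt: "p' u + p' v < p u + p v" unfolding puv p'uv using a by simp
    have p'o: "(\<Sum>x\<in>U - {u,v}. p' x) = (\<Sum>x\<in>U - {u,v}. p x)"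
      using w'o pdef by (intro sum.cong) (auto simp: p'_def)
    have "(\<Sum>x\<in>U. p' x) < (\<Sum>x\<in>U. p x)"
      using sum_two[OF assms(1) u v uv, of p'] sum_two[OF assms(1) u v uv, of p] p'o lt by simp
    then have "q * (\<Sum>x\<in>U. T x) / (\<Sum>x\<in>U. p x) < q * (\<Sum>x\<in>U. T x) / (\<Sum>x\<in>U. p' x)"
      using q Tsum p'pos by (intro divide_strict_left_mono) auto
    moreover have "EE U tau Gam N0 l T w' p' \<le> EE U tau Gam N0 l T w p" using opt_max feas' by blast
    ultimately show False
      using EE_feas[OF assms(1,3-9) feas'] EE_feas[OF assms(1,3-9) opt_feas] unfolding q_def by simp
  qed
  show "w u / T u = w v / T v \<and> p u / w u = p v / w v"
  proof
    show "w u / T u = w v / T v" using ratio by (metis inverse_divide)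
    show "p u / w u = p v / w v"
    proof -
      have "p u = req_power g N0 Gam (l u) (T u) (w u)" "p v = req_power g N0 Gam (l v) (T v) (w v)"
        using pdef u v by auto
      moreover have "w u > 0" "w v > 0" using wpos u v by auto
      ultimately show ?thesis using luv ratio unfolding req_power_def by simp
    qed
  qed
qed

end
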